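(* Let $A,B$ be complex $3\times 3$ matrices. The following are equivalent: (1) $A$ and $B$ have identical pseudospectra (i.e. $\|(zI-A)^{-1}\|=\|(zI-B)^{-1}\|$ for all $z\in\mathbb{C}$) and $\chi_A=\chi_B$; (2) $A$ and $B$ have super-identical pseudospectra, i.e. $s_k(zI-A)=s_k(zI-B)$ for all $z\in\mathbb{C}$ and $k=1,2,3$.
   Context: $\|\cdot\|$ is the spectral norm; by convention $\|(zI-T)^{-1}\|=\infty$ for $z$ an eigenvalue of $T$. $\chi_T(z)=\det(zI-T)$ is the characteristic polynomial. $s_1(T)\ge s_2(T)\ge s_3(T)$ are the singular values of $T$. *)

theory Defs
  imports "HOL-Analysis.Analysis" "HOL-Computational_Algebra.Computational_Algebra"
    "HOL-Library.Extended_Real"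
begin

type_synonym cmat3 = "complex ^ 3 ^ 3"

definition scalar_mat :: "complex \<Rightarrow> cmat3" where
  "scalar_mat z = (\<chi> i j. if i = j then z else 0)"

definition adjoint_mat :: "cmat3 \<Rightarrow> cmat3" where
  "adjoint_mat M = (\<chi> i j. cnj (M $ j $ i))"

definition char_poly3 :: "cmat3 \<Rightarrow> complex poly" where
  "char_poly3 T = det (\<chi> i j. (if i = j then [:0, 1:] else 0) - [:T $ i $ j:])"

definition spec_norm :: "cmat3 \<Rightarrow> real" where
  "spec_norm M = onorm (\<lambda>x. M *v x)"

definition resolvent_norm :: "cmat3 \<Rightarrow> complex \<Rightarrow> ereal" where
  "resolvent_norm T z =
     (if invertible (scalar_mat z - T) then ereal (spec_norm (matrix_inv (scalar_mat z - T)))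
      else \<infinity>)"

text \<open>Singular values s_1 \<ge> s_2 \<ge> s_3: nonnegative square roots of the eigenvalues of
  M^* M (counted with multiplicity, as roots of its characteristic polynomial),
  listed in decreasing order; singular_value M k is s_k(M) for k = 1,2,3.\<close>
definition singular_value :: "cmat3 \<Rightarrow> nat \<Rightarrow> real" where
  "singular_value M k =
     sqrt (rev (sorted_list_of_multiset
             (image_mset Re (proots (char_poly3 (adjoint_mat M ** M))))) ! (k - 1))"

end

theory Submission
  imports Defs
begin


no_notation fps_nth (infixl \<open>$\<close> 75)


definition tr3 :: "'a::comm_ring_1^3^3 \<Rightarrow> 'a" where "tr3 T = T$1$1 + T$2$2 + T$3$3"
definition m2 :: "'a::comm_ring_1^3^3 \<Rightarrow> 'a" where
 "m2 T = T$1$1*T$2$2 - T$1$2*T$2$1 + T$1$1*T$3$3 - T$1$3*T$3$1 + T$2$2*T$3$3 - T$2$3*T$3$2"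

lemma poly_char_poly3: "poly (char_poly3 T) z = det (scalar_mat z - T)"
  unfolding char_poly3_def det_3 scalar_mat_def by (simp add: algebra_simps)

lemma e11: "(scalar_mat z - T)$1$1 = z - T$1$1" by (simp add: scalar_mat_def)
lemma e22: "(scalar_mat z - T)$2$2 = z - T$2$2" by (simp add: scalar_mat_def)
lemma e33: "(scalar_mat z - T)$3$3 = z - T$3$3" by (simp add: scalar_mat_def)
lemma e12: "(scalar_mat z - T)$1$2 = - T$1$2" by (simp add: scalar_mat_def)
lemma e13: "(scalar_mat z - T)$1$3 = - T$1$3" by (simp add: scalar_mat_def)
lemma e21: "(scalar_mat z - T)$2$1 = - T$2$1" by (simp add: scalar_mat_def)
lemma e23: "(scalar_mat z - T)$2$3 = - T$2$3" by (simp add: scalar_mat_def)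
lemma e31: "(scalar_mat z - T)$3$1 = - T$3$1" by (simp add: scalar_mat_def)
lemma e32: "(scalar_mat z - T)$3$2 = - T$3$2" by (simp add: scalar_mat_def)
lemmas ents = e11 e22 e33 e12 e13 e21 e23 e31 e32

lemma X3: fixes a b c d e f g h i z :: "'a::comm_ring_1"
  shows "(z - a) * (z - e) * (z - i) + (- b) * (- f) * (- g) + (- c) * (- d) * (- h) - (z - a) * (- f) * (- h) - (- b) * (- d) * (z - i) - (- c) * (z - e) * (- g)
   = z^3 - (a + e + i) * z^2 + (a*e - b*d + a*i - c*g + e*i - f*h) * z - (a*e*i + b*f*g + c*d*h - a*f*h - b*d*i - c*e*g)"
  by (simp add: power3_eq_cube power2_eq_square ring_distribs)

lemma det_scalar_sub: "det (scalar_mat z - T) = z^3 - tr3 T * z^2 + m2 T * z - det T"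
  unfolding det_3[of "scalar_mat z - T"] ents tr3_def m2_def det_3[of T] by (rule X3)


lemma char_poly3_eq: "char_poly3 T = [:-det T, m2 T, -tr3 T, 1:]"
proof -
  have "poly (char_poly3 T) = poly [:-det T, m2 T, -tr3 T, 1:]"
    by (rule ext) (simp add: poly_char_poly3 det_scalar_sub power3_eq_cube power2_eq_square ring_distribs)
  then show ?thesis by (simp add: poly_eq_poly_eq_iff)
qed


lemma inv_ker: "invertible (A::'a::field^'n^'n) \<longleftrightarrow> (\<forall>x. A *v x = 0 \<longrightarrow> x = 0)"
  by (simp add: invertible_left_inverse matrix_left_invertible_ker)

lemma scalar_mat_mult: "scalar_mat z *v v = z *s v"
proof -
  have "\<And>i j. (if i = j then z else 0) * v$j = (if i = j then z * v$j else 0)" by simp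
  then show ?thesis by (simp add: vec_eq_iff matrix_vector_mult_def scalar_mat_def)
qed

lemma scalar_sub_mult: "(scalar_mat z - T) *v v = z *s v - T *v v"
  by (simp add: matrix_vector_mult_diff_rdistrib scalar_mat_mult)

lemma det_adjoint: "det (adjoint_mat M) = cnj (det M)"
  unfolding det_3 adjoint_mat_def by simp

lemma mcnj: "z * cnj z = (complex_of_real (cmod z))^2"
  using complex_norm_square[of z] by simp
lemma mcnj2: "cnj z * z = (complex_of_real (cmod z))^2"
  using complex_norm_square[of z] by (simp add: mult.commute)

lemma det_H: "det (adjoint_mat M ** M) = of_real ((cmod (det M))^2)"
  by (simp add: det_mul det_adjoint mcnj2)

lemma norm_vec_sq: "(norm (x::complex^'n))^2 = (\<Sum>i\<in>UNIV. (cmod (x$i))^2)"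
  by (simp add: norm_vec_def L2_set_def sum_nonneg)

lemma H_mult: "((adjoint_mat M ** M) *v v) $ i = (\<Sum>k\<in>UNIV. cnj (M$k$i) * (M *v v)$k)"
  unfolding matrix_vector_mul_assoc[symmetric] by (simp add: matrix_vector_mult_def adjoint_mat_def)

lemma hq: "(\<Sum>i\<in>UNIV. cnj (v$i) * ((adjoint_mat M ** M) *v v)$i) = of_real ((norm (M *v v))^2)"
proof -
  have "(\<Sum>i\<in>UNIV. cnj (v$i) * ((adjoint_mat M ** M) *v v)$i)
      = (\<Sum>i\<in>UNIV. \<Sum>k\<in>UNIV. cnj (M$k$i * v$i) * (M *v v)$k)"
    by (simp add: H_mult sum_distrib_left mult_ac)
  also have "\<dots> = (\<Sum>k\<in>UNIV. \<Sum>i\<in>UNIV. cnj (M$k$i * v$i) * (M *v v)$k)"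
    by (rule sum.swap)
  also have "\<dots> = (\<Sum>k\<in>UNIV. cnj ((M *v v)$k) * (M *v v)$k)"
    by (simp add: sum_distrib_right[symmetric] matrix_vector_mult_def)
  also have "\<dots> = (\<Sum>k\<in>UNIV. of_real ((cmod ((M *v v)$k))^2))"
    by (simp add: mcnj2)
  also have "\<dots> = of_real ((norm (M *v v))^2)"
    by (simp add: norm_vec_sq)
  finally show ?thesis .
qed

lemma hq_v: "(\<Sum>i\<in>UNIV. cnj (v$i) * (c *s v)$i) = c * of_real ((norm (v::complex^'n))^2)"
  by (simp add: norm_vec_sq mcnj2 mcnj sum_distrib_left mult_ac)


definition PP :: "cmat3 \<Rightarrow> complex poly" where "PP M = char_poly3 (adjoint_mat M ** M)"
definition mu :: "cmat3 \<Rightarrow> real" where "mu M = Min (Re ` set_mset (proots (PP M)))"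

lemma lin_mv: "linear (\<lambda>x. (M::cmat3) *v x)"
  using bounded_linear.linear[OF matrix_vector_mul_bounded_linear] by simp

lemma mv_scaleR: "(M::cmat3) *v (c *\<^sub>R x) = c *\<^sub>R (M *v x)"
  using linear_scale[OF lin_mv] by simp
lemma mv_add: "(M::cmat3) *v (x + y) = M *v x + M *v y"
  using linear_add[OF lin_mv] by simp

lemma PP_nz: "PP M \<noteq> 0"
  unfolding PP_def char_poly3_eq by simp

lemma PP_degree: "degree (PP M) = 3"
  unfolding PP_def char_poly3_eq by simp

lemma root_eig:
  assumes "poly (char_poly3 T) l = 0"
  shows "\<exists>v. v \<noteq> 0 \<and> T *v v = l *s v"
proof -
  have "det (scalar_mat l - T) = 0" using assms by (simp add: poly_char_poly3)
  then have "\<not> invertible (scalar_mat l - T)" by (simp add: invertible_det_nz)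
  then obtain v where "v \<noteq> 0" "(scalar_mat l - T) *v v = 0" by (auto simp: inv_ker)
  then show ?thesis by (auto simp: scalar_sub_mult)
qed

lemma eig_real:
  assumes "v \<noteq> 0" "(adjoint_mat M ** M) *v v = l *s v"
  shows "l = of_real ((norm (M *v v))^2 / (norm v)^2)"
proof -
  have "l * of_real ((norm v)^2) = of_real ((norm (M *v v))^2)"
    using hq[of v M] hq_v[of v l] assms(2) by simp
  moreover have "norm v \<noteq> 0" using assms(1) by simp
  ultimately show ?thesis by (simp add: field_simps)
qed

lemma root_real:
  assumes "l \<in># proots (PP M)"
  shows "\<exists>v. v \<noteq> 0 \<and> l = of_real ((norm (M *v v))^2 / (norm v)^2)"
proof -
  have "poly (char_poly3 (adjoint_mat M ** M)) l = 0" using assms PP_nz by (simp add: PP_def)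
  then obtain v where "v \<noteq> 0" "(adjoint_mat M ** M) *v v = l *s v" using root_eig by blast
  then show ?thesis using eig_real by blast
qed

lemma quad0:
  fixes a b :: real
  assumes "\<forall>t. 0 \<le> 2*t*a + t^2*b"
  shows "a = 0"
proof (rule ccontr)
  assume "a \<noteq> 0"
  define c where "c = \<bar>b\<bar> + 1"
  have c: "c > 0" "\<bar>b\<bar> \<le> c" unfolding c_def by auto
  define t where "t = - a / c"
  have a2: "a^2 > 0" using \<open>a \<noteq> 0\<close> by simp
  have e1: "2*t*a = -2*a^2/c" unfolding t_def by (simp add: power2_eq_square)
  have e2: "t^2*b = a^2*b/c^2" unfolding t_def by (simp add: power_divide)
  have "a^2*b/c^2 \<le> a^2*c/c^2"
    using c a2 by (intro divide_right_mono mult_left_mono) auto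
  also have "\<dots> = a^2/c" using c by (simp add: power2_eq_square)
  finally have "2*t*a + t^2*b \<le> -2*a^2/c + a^2/c" using e1 e2 by simp
  also have "\<dots> = - (a^2/c)" by simp
  also have "\<dots> < 0" using a2 c by simp
  finally show False using assms by (metis not_le)
qed

lemma norm_add_sq: "(norm (u + t *\<^sub>R w))^2 = (norm u)^2 + 2*t*inner u w + t^2 * (norm w)^2"
  for u w :: "'a::real_inner"
  by (simp only: power2_norm_eq_inner) (simp add: inner_add_left inner_add_right inner_commute algebra_simps power2_eq_square)

lemma min_exists: "\<exists>x0::complex^3. norm x0 = 1 \<and> (\<forall>x. norm x = 1 \<longrightarrow> (norm (M *v x0))^2 \<le> (norm (M *v x))^2)"
proof -
  have "continuous_on (sphere 0 1) (\<lambda>x::complex^3. (norm (M *v x))^2)"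
    by (intro continuous_intros linear_continuous_on matrix_vector_mul_bounded_linear)
  moreover have "compact (sphere (0::complex^3) 1)" by simp
  moreover have "sphere (0::complex^3) 1 \<noteq> {}" by simp
  ultimately obtain x0 where "x0 \<in> sphere 0 1" "\<forall>y\<in>sphere 0 1. (norm (M *v x0))^2 \<le> (norm (M *v y))^2"
    using continuous_attains_inf by blast
  then show ?thesis by auto
qed


lemma mv_axis: "(M::cmat3) *v axis j c = (\<chi> k. M$k$j * c)"
proof -
  have "\<And>k l. M$k$l * axis j c $ l = (if l = j then M$k$j * c else 0)" by (simp add: axis_def)
  then show ?thesis by (simp add: vec_eq_iff matrix_vector_mult_def)
qed

lemma inner_cx: "inner a b = Re (cnj b * a)" for a b :: complex
  by (simp add: inner_complex_def)

lemma homog_lower: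
  fixes M :: cmat3
  assumes "\<forall>x::complex^3. norm x = 1 \<longrightarrow> m \<le> (norm (M *v x))^2"
  shows "m * (norm y)^2 \<le> (norm (M *v y))^2"
proof (cases "y = 0")
  case True then show ?thesis by simp
next
  case False
  define y' where "y' = (1 / norm y) *\<^sub>R y"
  have "norm y' = 1" using False by (simp add: y'_def)
  then have "m \<le> (norm (M *v y'))^2" using assms by blast
  have "M *v y' = (1 / norm y) *\<^sub>R (M *v y)" unfolding y'_def by (rule mv_scaleR)
  then have "(norm (M *v y'))^2 = (norm (M *v y))^2 / (norm y)^2"
    by (simp add: power_divide)
  show ?thesis using False \<open>m \<le> (norm (M *v y'))^2\<close> \<open>(norm (M *v y'))^2 = (norm (M *v y))^2 / (norm y)^2\<close> by (simp add: field_simps)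
qed

lemma min_eig:
  fixes M :: cmat3
  assumes x0: "norm x0 = 1" and mn: "\<forall>x. norm x = 1 \<longrightarrow> (norm (M *v x0))^2 \<le> (norm (M *v x))^2"
  defines "m \<equiv> (norm (M *v x0))^2"
  shows "(adjoint_mat M ** M) *v x0 = of_real m *s x0"
proof -
  have low: "\<And>y. m * (norm y)^2 \<le> (norm (M *v y))^2"
    using homog_lower[of m M] mn m_def by blast
  have inn: "inner (M *v x0) (M *v y) = m * inner x0 y" for y
  proof -
    let ?a = "inner (M *v x0) (M *v y) - m * inner x0 y"
    let ?b = "(norm (M *v y))^2 - m * (norm y)^2"
    have "\<forall>t. 0 \<le> 2*t*?a + t^2*?b"
    proof
      fix t :: real
      have "m * (norm (x0 + t *\<^sub>R y))^2 \<le> (norm (M *v (x0 + t *\<^sub>R y)))^2" by (rule low)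
      then have "m * (1 + 2*t*inner x0 y + t^2*(norm y)^2) \<le> m + 2*t*inner (M *v x0) (M *v y) + t^2*(norm (M *v y))^2"
        using x0 by (simp add: mv_add mv_scaleR norm_add_sq m_def)
      then show "0 \<le> 2*t*?a + t^2*?b" by (simp add: algebra_simps)
    qed
    then have "?a = 0" by (rule quad0)
    then show ?thesis by simp
  qed
  show ?thesis
  unfolding vec_eq_iff
  proof (intro allI)
    fix j
    let ?h = "((adjoint_mat M ** M) *v x0) $ j"
    have key: "Re (cnj c * ?h) = m * Re (cnj c * x0$j)" for c
    proof -
      have "inner (M *v x0) (M *v axis j c) = Re (cnj c * ?h)"
        by (simp add: mv_axis inner_vec_def inner_cx H_mult sum_distrib_left mult_ac)
      moreover have "inner x0 (axis j c) = Re (cnj c * x0$j)" by (simp add: inner_axis inner_cx)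
      ultimately show ?thesis using inn[of "axis j c"] by simp
    qed
    have "Re ?h = m * Re (x0$j)" using key[of 1] by simp
    moreover have "Im ?h = m * Im (x0$j)" using key[of "\<i>"] by simp
    ultimately show "?h = (of_real m *s x0) $ j" by (simp add: complex_eq_iff)
  qed
qed

lemma mu_props:
  fixes M :: cmat3
  shows "(\<forall>x. mu M * (norm x)^2 \<le> (norm (M *v x))^2) \<and> (\<exists>x. norm x = 1 \<and> (norm (M *v x))^2 = mu M) \<and> mu M \<ge> 0"
proof -
  obtain x0 :: "complex^3" where x0: "norm x0 = 1" and mn: "\<forall>x. norm x = 1 \<longrightarrow> (norm (M *v x0))^2 \<le> (norm (M *v x))^2"
    using min_exists by blast
  define m where "m = (norm (M *v x0))^2"
  have low: "\<And>y. m * (norm y)^2 \<le> (norm (M *v y))^2"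
    using homog_lower[of m M] mn m_def by blast
  have eig: "(adjoint_mat M ** M) *v x0 = of_real m *s x0" using min_eig[OF x0 mn] m_def by simp
  have "(scalar_mat (of_real m) - adjoint_mat M ** M) *v x0 = 0" by (simp add: scalar_sub_mult eig)
  moreover have "x0 \<noteq> 0" using x0 by auto
  ultimately have "\<not> invertible (scalar_mat (of_real m) - adjoint_mat M ** M)" by (auto simp: inv_ker)
  then have "poly (PP M) (of_real m) = 0" by (simp add: PP_def poly_char_poly3 invertible_det_nz)
  then have mS: "m \<in> Re ` set_mset (proots (PP M))" using PP_nz by force
  have fin: "finite (Re ` set_mset (proots (PP M)))" by simp
  have le1: "mu M \<le> m" unfolding mu_def using Min_le[OF fin mS] .
  have "mu M \<in> Re ` set_mset (proots (PP M))" unfolding mu_def using fin mS by (intro Min_in) auto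
  then obtain l where l: "l \<in># proots (PP M)" "mu M = Re l" by auto
  obtain v where v: "v \<noteq> 0" "l = of_real ((norm (M *v v))^2 / (norm v)^2)" using root_real[OF l(1)] by blast
  have "m \<le> (norm (M *v v))^2 / (norm v)^2" using low[of v] v(1) by (simp add: field_simps)
  then have "m \<le> mu M" using l v by simp
  with le1 have eq: "mu M = m" by simp
  show ?thesis
  proof (intro conjI)
    show "\<forall>x. mu M * (norm x)^2 \<le> (norm (M *v x))^2" using low eq by simp
    show "\<exists>x. norm x = 1 \<and> (norm (M *v x))^2 = mu M" using x0 eq m_def by (intro exI[of _ x0]) simp
    show "mu M \<ge> 0" using eq m_def by simp
  qed
qed


lemma inv_mu: "invertible (M::cmat3) \<longleftrightarrow> mu M > 0"
proof
  assume inv: "invertible M"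
  show "mu M > 0"
  proof (rule ccontr)
    assume "\<not> mu M > 0"
    then have "mu M = 0" using mu_props[of M] by simp
    then obtain x where "norm x = 1" "(norm (M *v x))^2 = 0" using mu_props[of M] by metis
    then have "x \<noteq> 0" "M *v x = 0" by auto
    then show False using inv by (auto simp: inv_ker)
  qed
next
  assume pos: "mu M > 0"
  show "invertible M" unfolding inv_ker
  proof (intro allI impI)
    fix x assume "M *v x = 0"
    then have "mu M * (norm x)^2 \<le> 0" using mu_props[of M] by (metis norm_zero power_zero_numeral)
    then show "x = 0" using pos by (simp add: mult_le_0_iff)
  qed
qed

lemma matrix_inv_props:
  assumes "invertible (M::'a::semiring_1^'n^'n)"
  shows "M ** matrix_inv M = mat 1 \<and> matrix_inv M ** M = mat 1"
  using assms unfolding invertible_def matrix_inv_def by (rule someI_ex)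

lemma spec_inv:
  assumes inv: "invertible (M::cmat3)"
  shows "spec_norm (matrix_inv M) = 1 / sqrt (mu M)"
proof -
  let ?N = "matrix_inv M"
  have MN: "M ** ?N = mat 1" and NM: "?N ** M = mat 1" using matrix_inv_props[OF inv] by auto
  have pos: "mu M > 0" using inv inv_mu by blast
  have up: "norm (?N *v y) \<le> (1 / sqrt (mu M)) * norm y" for y
  proof -
    have "M *v (?N *v y) = y" by (simp add: matrix_vector_mul_assoc MN)
    then have "mu M * (norm (?N *v y))^2 \<le> (norm y)^2" using mu_props[of M] by metis
    then have "sqrt (mu M * (norm (?N *v y))^2) \<le> sqrt ((norm y)^2)" by (rule real_sqrt_le_mono)
    then have "sqrt (mu M) * norm (?N *v y) \<le> norm y" by (simp add: real_sqrt_mult)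
    then show ?thesis using pos by (simp add: field_simps)
  qed
  have le: "spec_norm ?N \<le> 1 / sqrt (mu M)"
    unfolding spec_norm_def by (rule onorm_le) (rule up)
  obtain x where x: "norm x = 1" "(norm (M *v x))^2 = mu M" using mu_props[of M] by metis
  have nx: "norm (M *v x) = sqrt (mu M)" using x(2) by (metis norm_ge_zero real_sqrt_unique)
  have "?N *v (M *v x) = x" by (simp add: matrix_vector_mul_assoc NM)
  then have "1 \<le> spec_norm ?N * sqrt (mu M)"
    using onorm[OF matrix_vector_mul_bounded_linear, of ?N "M *v x"] x(1) nx unfolding spec_norm_def by simp
  then have "1 / sqrt (mu M) \<le> spec_norm ?N" using pos by (simp add: field_simps)
  with le show ?thesis by simp
qed

lemma resolvent_mu:
  "resolvent_norm T z = (if mu (scalar_mat z - T) = 0 then \<infinity> else ereal (1 / sqrt (mu (scalar_mat z - T))))"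
proof -
  have "mu (scalar_mat z - T) \<ge> 0" using mu_props by blast
  then show ?thesis unfolding resolvent_norm_def using inv_mu[of "scalar_mat z - T"] spec_inv[of "scalar_mat z - T"]
    by auto
qed

lemma PP_lead: "lead_coeff (PP M) = 1"
  unfolding PP_def char_poly3_eq by simp

lemma roots_of_real: "image_mset (\<lambda>x. complex_of_real (Re x)) (proots (PP M)) = proots (PP M)"
proof -
  have "image_mset (\<lambda>x. complex_of_real (Re x)) (proots (PP M)) = image_mset id (proots (PP M))"
  proof (rule image_mset_cong)
    fix l assume "l \<in># proots (PP M)"
    then obtain v where "l = of_real ((norm (M *v v))^2 / (norm v)^2)" using root_real by blast
    then show "complex_of_real (Re l) = id l" by simp
  qed
  then show ?thesis by simp
qed

lemma PP_eq_from_Re: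
  assumes "image_mset Re (proots (PP M)) = image_mset Re (proots (PP N))"
  shows "PP M = PP N"
proof -
  have "proots (PP M) = proots (PP N)"
  proof -
    have "proots (PP M) = image_mset complex_of_real (image_mset Re (proots (PP M)))"
      using roots_of_real[of M] by (simp add: multiset.map_comp o_def)
    also have "\<dots> = image_mset complex_of_real (image_mset Re (proots (PP N)))" using assms by simp
    also have "\<dots> = proots (PP N)"
      using roots_of_real[of N] by (simp add: multiset.map_comp o_def)
    finally show ?thesis .
  qed
  then show ?thesis
    using complex_poly_decompose_multiset[of "PP M"] complex_poly_decompose_multiset[of "PP N"] PP_lead
    by metis
qed

definition LL :: "cmat3 \<Rightarrow> real list" where
  "LL M = sorted_list_of_multiset (image_mset Re (proots (PP M)))"

lemma sv_LL: "singular_value M k = sqrt (rev (LL M) ! (k - 1))"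
  unfolding singular_value_def LL_def PP_def ..

lemma LL_len: "length (LL M) = 3"
proof -
  have "length (LL M) = size (proots (PP M))" unfolding LL_def
    by (metis mset_sorted_list_of_multiset size_image_mset size_mset)
  also have "\<dots> = 3" by (simp add: size_proots_complex PP_degree)
  finally show ?thesis .
qed

lemma SV_iff: "(\<forall>k\<in>{1,2,3}. singular_value M k = singular_value N k) \<longleftrightarrow> PP M = PP N"
proof
  assume "PP M = PP N"
  then show "\<forall>k\<in>{1,2,3}. singular_value M k = singular_value N k" by (simp add: sv_LL LL_def)
next
  assume h: "\<forall>k\<in>{1,2,3}. singular_value M k = singular_value N k"
  have "rev (LL M) ! i = rev (LL N) ! i" if "i < 3" for i
  proof -
    have "Suc i \<in> {1,2,3}" using that by auto
    then have "singular_value M (Suc i) = singular_value N (Suc i)" using h by blast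
    then show ?thesis by (simp add: sv_LL)
  qed
  then have "rev (LL M) = rev (LL N)" by (intro nth_equalityI) (auto simp: LL_len)
  then have "LL M = LL N" by simp
  then have "image_mset Re (proots (PP M)) = image_mset Re (proots (PP N))"
    unfolding LL_def by (metis mset_sorted_list_of_multiset)
  then show "PP M = PP N" by (rule PP_eq_from_Re)
qed


lemma eq_at_point:
  fixes f g :: "complex \<Rightarrow> 'b::t2_space"
  assumes "isCont f z0" "isCont g z0" "\<And>z. z \<noteq> z0 \<Longrightarrow> z \<notin> S \<Longrightarrow> f z = g z" "finite S"
  shows "f z0 = g z0"
proof -
  have "closed (S - {z0})" using assms(4) by (simp add: finite_imp_closed)
  then have "open (- (S - {z0}))" by (rule open_Compl)
  then have "eventually (\<lambda>z. z \<in> - (S - {z0})) (nhds z0)" by (intro eventually_nhds_in_open) auto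
  then have ev: "eventually (\<lambda>z. f z = g z) (at z0)"
    unfolding eventually_at_filter by (rule eventually_mono) (auto intro: assms(3))
  have "(f \<longlongrightarrow> f z0) (at z0)" using assms(1) by (simp add: isCont_def)
  then have "(g \<longlongrightarrow> f z0) (at z0)" using ev by (rule Lim_transform_eventually)
  moreover have "(g \<longlongrightarrow> g z0) (at z0)" using assms(2) by (simp add: isCont_def)
  ultimately show ?thesis by (intro tendsto_unique[of "at z0"]) auto
qed

lemma lead1_deg0: "lead_coeff (p::'a::zero_neq_one poly) = 1 \<Longrightarrow> degree p = 0 \<Longrightarrow> p = [:1:]"
  by (metis coeff_pCons_0 degree_0_id lead_coeff_pCons(1) pCons_0_0 zero_neq_one) 

lemma monic_abs_eq:
  fixes p q :: "complex poly"
  assumes "lead_coeff p = 1" "lead_coeff q = 1" "\<forall>z. cmod (poly p z) = cmod (poly q z)"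
  shows "p = q"
  using assms
proof (induction "degree p" arbitrary: p q)
  case 0
  then have p1: "p = [:1:]" using lead1_deg0 by metis
  then have "\<forall>z. poly q z \<noteq> 0" using 0 by (metis norm_eq_zero one_neq_zero poly_pCons poly_0 add.right_neutral mult_zero_right)
  then have "proots q = {#}" using 0 by (auto simp: multiset_eq_iff count_proots order_root)
  then have "degree q = 0" by (metis size_empty size_proots_complex)
  then have "q = [:1:]" using 0 lead1_deg0 by metis
  with p1 show ?case by simp
next
  case (Suc n)
  have "size (proots p) > 0" using Suc.hyps(2) by (simp add: size_proots_complex)
  then obtain z0 where "z0 \<in># proots p" by (metis multiset_nonemptyE size_empty less_irrefl)
  moreover have "p \<noteq> 0" using Suc.prems(1) by auto
  ultimately have pz: "poly p z0 = 0" by simp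
  then have qz: "poly q z0 = 0" using Suc.prems(3) by (metis norm_eq_zero)
  obtain p1 where p1: "p = [:-z0, 1:] * p1" using pz by (metis poly_eq_0_iff_dvd dvdE)
  obtain q1 where q1: "q = [:-z0, 1:] * q1" using qz by (metis poly_eq_0_iff_dvd dvdE)
  have "lead_coeff p = lead_coeff [:-z0, 1:] * lead_coeff p1" unfolding p1 by (rule lead_coeff_mult)
  then have lp1: "lead_coeff p1 = 1" using Suc.prems(1) by simp
  have "lead_coeff q = lead_coeff [:-z0, 1:] * lead_coeff q1" unfolding q1 by (rule lead_coeff_mult)
  then have lq1: "lead_coeff q1 = 1" using Suc.prems(2) by simp
  have "p1 \<noteq> 0" using lp1 by auto
  then have "degree p = degree [:-z0, 1:] + degree p1" unfolding p1 by (intro degree_mult_eq) auto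
  then have dp1: "n = degree p1" using Suc.hyps(2) by simp
  have off: "cmod (poly p1 z) = cmod (poly q1 z)" if "z \<noteq> z0" "z \<notin> {}" for z
  proof -
    have "cmod (z - z0) * cmod (poly p1 z) = cmod (z - z0) * cmod (poly q1 z)"
      using Suc.prems(3) p1 q1 by (metis norm_mult poly_mult poly_pCons mult_1 add.commute diff_conv_add_uminus mult_zero_right add.right_neutral poly_0 mult.commute)
    then show ?thesis using that by simp
  qed
  have "\<forall>z. cmod (poly p1 z) = cmod (poly q1 z)"
  proof
    fix z
    show "cmod (poly p1 z) = cmod (poly q1 z)"
    proof (cases "z = z0")
      case False then show ?thesis using off by simp
    next
      case True
      have "cmod (poly p1 z0) = cmod (poly q1 z0)"
        by (rule eq_at_point[where S="{}"]) (auto intro!: continuous_intros off)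
      then show ?thesis using True by simp
    qed
  qed
  then have "p1 = q1" using Suc.hyps(1)[OF dp1 lp1 lq1] by blast
  then show ?case using p1 q1 by simp
qed


lemma growth:
  fixes P :: "real poly"
  assumes "\<forall>t\<ge>T. \<bar>poly P t\<bar> \<le> C * t + C"
  shows "degree P \<le> 1"
proof (rule ccontr)
  assume "\<not> degree P \<le> 1"
  then have n2: "degree P \<ge> 2" by simp
  then have "P \<noteq> 0" by auto
  then have lc: "lead_coeff P \<noteq> 0" by simp
  have lim1: "((\<lambda>t. poly (reflect_poly P) (inverse t)) \<longlongrightarrow> lead_coeff P) at_top"
  proof -
    have "((\<lambda>t. inverse t :: real) \<longlongrightarrow> 0) at_top" by (intro tendsto_inverse_0_at_top filterlim_ident)
    then have "((\<lambda>t. poly (reflect_poly P) (inverse t)) \<longlongrightarrow> poly (reflect_poly P) 0) at_top"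
      by (rule tendsto_poly)
    then show ?thesis by (simp add: poly_0_coeff_0)
  qed
  then have lim2: "((\<lambda>t. \<bar>poly (reflect_poly P) (inverse t)\<bar>) \<longlongrightarrow> \<bar>lead_coeff P\<bar>) at_top"
    by (rule tendsto_rabs)
  have lim3: "((\<lambda>t. C * inverse t + C * inverse t * inverse t) \<longlongrightarrow> C * 0 + C * 0 * 0) at_top"
    by (intro tendsto_intros tendsto_inverse_0_at_top filterlim_ident)
  have ev: "eventually (\<lambda>t. \<bar>poly (reflect_poly P) (inverse t)\<bar> \<le> C * inverse t + C * inverse t * inverse t) at_top"
    using eventually_ge_at_top[of "max T 1"]
  proof (rule eventually_mono)
    fix t assume t: "max T 1 \<le> t"
    then have t1: "t \<ge> 1" "t \<ge> T" by auto
    have "\<bar>poly (reflect_poly P) (inverse t)\<bar> = \<bar>poly P t\<bar> / t ^ degree P"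
      using t1 by (simp add: poly_reflect_poly_nz power_inverse divide_inverse abs_mult mult.commute)
    also have "\<dots> \<le> \<bar>poly P t\<bar> / t^2"
      using t1 n2 by (intro divide_left_mono power_increasing) auto
    also have "\<dots> \<le> (C * t + C) / t^2"
      using t1 assms by (intro divide_right_mono) auto
    also have "\<dots> = C * inverse t + C * inverse t * inverse t"
      using t1 by (simp add: field_simps power2_eq_square)
    finally show "\<bar>poly (reflect_poly P) (inverse t)\<bar> \<le> C * inverse t + C * inverse t * inverse t" .
  qed
  have "\<bar>lead_coeff P\<bar> \<le> C * 0 + C * 0 * 0"
    using tendsto_le[OF trivial_limit_at_top_linorder lim3 lim2 ev] .
  then show False using lc by simp
qed

lemma deg1_poly:
  fixes P :: "real poly"
  assumes "degree P \<le> 1"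
  shows "poly P t = coeff P 0 + coeff P 1 * t"
proof -
  have "P = [:coeff P 0, coeff P 1:]"
  proof (rule poly_eqI)
    fix n show "coeff P n = coeff [:coeff P 0, coeff P 1:] n"
      using assms by (cases n) (auto simp: coeff_eq_0 coeff_pCons split: nat.splits)
  qed
  then show ?thesis by (metis poly_pCons mult.commute add_0_right poly_0 mult_zero_right)
qed

lemma lin0:
  fixes a b K :: real
  assumes "\<forall>t. \<bar>t\<bar> > K \<longrightarrow> t * a \<le> b"
  shows "a = 0"
proof (rule ccontr)
  assume a: "a \<noteq> 0"
  show False
  proof (cases "a > 0")
    case True
    define t where "t = \<bar>K\<bar> + 1 + \<bar>b\<bar> / a"
    have "\<bar>b\<bar> / a \<ge> 0" using True by simp
    then have "\<bar>t\<bar> > K" unfolding t_def by simp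
    moreover have "t * a = \<bar>K\<bar> * a + a + \<bar>b\<bar>" unfolding t_def using True by (simp add: field_simps)
    then have "t * a > b" using True by (smt (verit) mult_nonneg_nonneg abs_ge_zero)
    ultimately show False using assms by force
  next
    case False
    then have na: "a < 0" using a by simp
    define t where "t = - (\<bar>K\<bar> + 1 + \<bar>b\<bar> / (- a))"
    have "\<bar>b\<bar> / (- a) \<ge> 0" using na by (intro divide_nonneg_pos) auto
    then have "\<bar>t\<bar> > K" unfolding t_def by simp
    moreover have "t * a = \<bar>K\<bar> * (- a) + (- a) + \<bar>b\<bar>" unfolding t_def using na by (simp add: field_simps)
    then have "t * a > b" using na by (smt (verit) mult_nonneg_nonneg abs_ge_zero)
    ultimately show False using assms by force
  qed
qed

definition pf :: "(real \<Rightarrow> complex) \<Rightarrow> bool" where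
  "pf f \<longleftrightarrow> (\<exists>Q. \<forall>t. f t = poly Q (complex_of_real t))"

lemma pf_const[intro]: "pf (\<lambda>t. c)"
  unfolding pf_def by (rule exI[of _ "[:c:]"]) simp
lemma pf_id[intro]: "pf (\<lambda>t. complex_of_real t)"
  unfolding pf_def by (rule exI[of _ "[:0, 1:]"]) simp
lemma pf_add[intro]: "pf f \<Longrightarrow> pf g \<Longrightarrow> pf (\<lambda>t. f t + g t)"
  unfolding pf_def by (metis poly_add)
lemma pf_diff[intro]: "pf f \<Longrightarrow> pf g \<Longrightarrow> pf (\<lambda>t. f t - g t)"
  unfolding pf_def by (metis poly_diff)
lemma pf_mult[intro]: "pf f \<Longrightarrow> pf g \<Longrightarrow> pf (\<lambda>t. f t * g t)"
  unfolding pf_def by (metis poly_mult)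
lemma pf_uminus[intro]: "pf f \<Longrightarrow> pf (\<lambda>t. - f t)"
  unfolding pf_def by (metis poly_minus)
lemma pf_cnj[intro]: "pf f \<Longrightarrow> pf (\<lambda>t. cnj (f t))"
  unfolding pf_def by (metis poly_cnj complex_cnj_complex_of_real)

lemma Re_poly_real: "Re (poly Q (complex_of_real t)) = poly (map_poly Re Q) t"
  by (induction Q) (simp_all add: map_poly_pCons)


lemma norm_smult_vec: "norm (c *s (x::complex^'n)) = cmod c * norm x"
proof -
  have "(norm (c *s x))^2 = (cmod c * norm x)^2"
    by (simp add: norm_vec_sq power_mult_distrib norm_mult sum_distrib_left)
  then show ?thesis by (simp add: power2_eq_iff_nonneg)
qed

lemma smult_real: "(complex_of_real t * w) *s (x::complex^'n) = t *\<^sub>R (w *s x)"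
  unfolding vec_eq_iff vector_scaleR_component by (simp add: scaleR_conv_of_real)

lemma norm_diff_sq: "(norm (t *\<^sub>R u - v))^2 = t^2 * (norm u)^2 - 2*t*inner u v + (norm v)^2"
  for u v :: "'a::real_inner"
  by (simp only: power2_norm_eq_inner) (simp add: inner_diff_left inner_diff_right inner_commute algebra_simps power2_eq_square)

lemma scalar_dir:
  fixes A :: cmat3 and w :: complex and d :: real and g :: "complex \<Rightarrow> complex"
  assumes w: "cmod w = 1" and d: "d \<noteq> 0"
    and hyp: "\<forall>z. mu (scalar_mat z - A) > 0 \<longrightarrow> mu (scalar_mat z - A) * d = Re (g z)"
    and pfg: "pf (\<lambda>t. g (complex_of_real t * w))"
  shows "\<exists>k. \<forall>x. inner (w *s x) (A *v x) = k * (norm x)^2"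
proof -
  obtain Q where Q: "\<And>t. g (complex_of_real t * w) = poly Q (complex_of_real t)"
    using pfg unfolding pf_def by blast
  define R where "R = map_poly Re Q"
  define M where "M t = scalar_mat (complex_of_real t * w) - A" for t
  define K where "K = onorm (\<lambda>x. A *v x)"
  have K0: "K \<ge> 0" unfolding K_def by (intro onorm_pos_le matrix_vector_mul_bounded_linear)
  have AK: "norm (A *v x) \<le> K * norm x" for x
    unfolding K_def by (rule onorm[OF matrix_vector_mul_bounded_linear])
  have Mx: "M t *v x = t *\<^sub>R (w *s x) - A *v x" for t x
    by (simp add: M_def scalar_sub_mult smult_real)
  have nw: "norm (w *s x) = norm x" for x by (simp add: norm_smult_vec w)
  have lowM: "norm (M t *v x) \<ge> (\<bar>t\<bar> - K) * norm x" for t x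
  proof -
    have "norm (M t *v x) \<ge> norm (t *\<^sub>R (w *s x)) - norm (A *v x)"
      unfolding Mx by (rule norm_triangle_ineq2)
    moreover have "norm (t *\<^sub>R (w *s x)) = \<bar>t\<bar> * norm x" by (simp add: nw)
    ultimately show ?thesis using AK[of x] by (simp add: algebra_simps nw)
  qed
  have upM: "norm (M t *v x) \<le> (\<bar>t\<bar> + K) * norm x" for t x
  proof -
    have "norm (M t *v x) \<le> norm (t *\<^sub>R (w *s x)) + norm (A *v x)"
      unfolding Mx by (rule norm_triangle_ineq4)
    moreover have "norm (t *\<^sub>R (w *s x)) = \<bar>t\<bar> * norm x" by (simp add: nw)
    ultimately show ?thesis using AK[of x] by (simp add: algebra_simps nw)
  qed
  have mubounds: "(\<bar>t\<bar> - K)^2 \<le> mu (M t) \<and> mu (M t) \<le> (\<bar>t\<bar> + K)^2" if t: "\<bar>t\<bar> > K" for t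
  proof
    obtain x where x: "norm x = 1" "(norm (M t *v x))^2 = mu (M t)" using mu_props[of "M t"] by metis
    have "\<bar>t\<bar> - K \<le> norm (M t *v x)" using lowM[of t x] x(1) by simp
    then have "(\<bar>t\<bar> - K)^2 \<le> (norm (M t *v x))^2" using t by (intro power_mono) auto
    then show "(\<bar>t\<bar> - K)^2 \<le> mu (M t)" using x(2) by simp
    have e: "norm (axis 1 (1::complex) :: complex^3) = 1" by simp
    have "mu (M t) * (norm (axis 1 (1::complex) :: complex^3))^2 \<le> (norm (M t *v axis 1 1))^2"
      using mu_props[of "M t"] by blast
    then have "mu (M t) \<le> (norm (M t *v axis 1 1))^2" using e by simp
    also have "\<dots> \<le> (\<bar>t\<bar> + K)^2" using upM[of t "axis 1 1"] e K0 by (intro power_mono) auto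
    finally show "mu (M t) \<le> (\<bar>t\<bar> + K)^2" .
  qed
  have muR: "mu (M t) = poly R t / d" if t: "\<bar>t\<bar> > K" for t
  proof -
    have "(\<bar>t\<bar> - K)^2 > 0" using t by simp
    then have "mu (M t) > 0" using mubounds[OF t] by linarith
    then have "mu (M t) * d = Re (g (complex_of_real t * w))" using hyp unfolding M_def by blast
    also have "\<dots> = poly R t" unfolding Q R_def by (rule Re_poly_real)
    finally show ?thesis using d by (simp add: field_simps)
  qed
  define Phi where "Phi = smult (1/d) R - [:0, 0, 1:]"
  have Phi: "poly Phi t = mu (M t) - t^2" if "\<bar>t\<bar> > K" for t
    using muR[OF that] by (simp add: Phi_def power2_eq_square divide_inverse mult.commute)
  have "\<forall>t\<ge>K + 1. \<bar>poly Phi t\<bar> \<le> (2*K + K^2) * t + (2*K + K^2)"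
  proof (intro allI impI)
    fix t assume t: "t \<ge> K + 1"
    then have t1: "\<bar>t\<bar> > K" "t \<ge> 1" "\<bar>t\<bar> = t" using K0 by auto
    have "\<bar>poly Phi t\<bar> \<le> 2*K*t + K^2"
      using mubounds[OF t1(1)] Phi[OF t1(1)] t1 K0
      by (simp add: abs_le_iff power2_eq_square algebra_simps) (insert mult_nonneg_nonneg[OF K0 K0], linarith)
    also have "\<dots> \<le> (2*K + K^2) * t + (2*K + K^2)"
      using t1 K0 by (simp add: algebra_simps)
    finally show "\<bar>poly Phi t\<bar> \<le> (2*K + K^2) * t + (2*K + K^2)" .
  qed
  then have "degree Phi \<le> 1" by (rule growth)
  then have Phi1: "poly Phi t = coeff Phi 0 + coeff Phi 1 * t" for t by (rule deg1_poly)
  define c0 where "c0 = coeff Phi 0"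
  define c1 where "c1 = coeff Phi 1"
  have mu_eq: "mu (M t) = t^2 + c1 * t + c0" if "\<bar>t\<bar> > K" for t
    using Phi[OF that] Phi1[of t] c0_def c1_def by simp
  show ?thesis
  proof (intro exI allI)
    fix x
    let ?I = "inner (w *s x) (A *v x)"
    have "\<forall>t. \<bar>t\<bar> > K \<longrightarrow> t * (c1 * (norm x)^2 + 2 * ?I) \<le> (norm (A *v x))^2 - c0 * (norm x)^2"
    proof (intro allI impI)
      fix t assume t: "\<bar>t\<bar> > K"
      have "mu (M t) * (norm x)^2 \<le> (norm (M t *v x))^2" using mu_props[of "M t"] by blast
      also have "\<dots> = t^2 * (norm x)^2 - 2*t*?I + (norm (A *v x))^2"
        unfolding Mx norm_diff_sq nw ..
      finally have "(t^2 + c1 * t + c0) * (norm x)^2 \<le> t^2 * (norm x)^2 - 2*t*?I + (norm (A *v x))^2"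
        using mu_eq[OF t] by simp
      then show "t * (c1 * (norm x)^2 + 2 * ?I) \<le> (norm (A *v x))^2 - c0 * (norm x)^2"
        by (simp add: algebra_simps)
    qed
    then have "c1 * (norm x)^2 + 2 * ?I = 0" by (rule lin0)
    then show "?I = (- c1 / 2) * (norm x)^2" by simp
  qed
qed


lemma scalar_from_inner:
  fixes A :: cmat3
  assumes h1: "\<forall>x. inner x (A *v x) = k1 * (norm x)^2"
      and h2: "\<forall>x. inner (\<i> *s x) (A *v x) = k2 * (norm x)^2"
  shows "A = scalar_mat (Complex k1 k2)"
proof -
  define c where "c = Complex k1 k2"
  define bf where "bf x y = (\<Sum>i\<in>UNIV. cnj (x$i) * (A *v y)$i)" for x y :: "complex^3"
  have bfq: "bf x x = c * of_real ((norm x)^2)" for x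
  proof -
    have "Re (bf x x) = inner x (A *v x)"
      by (simp add: bf_def inner_vec_def inner_complex_def Re_sum)
    moreover have "Im (bf x x) = inner (\<i> *s x) (A *v x)"
      by (simp add: bf_def inner_vec_def inner_complex_def Im_sum)
    ultimately show ?thesis using h1 h2 by (simp add: complex_eq_iff c_def)
  qed
  have bf_addl: "bf (x + y) z = bf x z + bf y z" for x y z
    by (simp add: bf_def distrib_right sum.distrib)
  have bf_addr: "bf x (y + z) = bf x y + bf x z" for x y z
    by (simp add: bf_def mv_add distrib_left sum.distrib)
  have bf_ax: "bf (axis j a) (axis k b) = cnj a * (A$j$k * b)" for j k a b
  proof -
    have "\<And>i. cnj (axis j a $ i) * (A *v axis k b) $ i = (if i = j then cnj a * (A$j$k * b) else 0)"
      unfolding mv_axis by (simp add: axis_def)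
    then show ?thesis by (simp add: bf_def)
  qed
  have diag: "A$j$j = c" for j
    using bfq[of "axis j 1"] bf_ax[of j 1 j 1] by simp
  have off: "A$j$k + u * A$j$k * 0 = A$j$k" for j k u by simp
  have offd: "A$j$k = 0" if jk: "j \<noteq> k" for j k
  proof -
    have eq: "u * A$j$k + cnj u * A$k$j + cnj u * u * c = c * of_real (cmod u)^2" for u
    proof -
      have "(norm (axis j 1 + axis k u))^2 = inner (axis j 1 + axis k u) (axis j 1 + axis k u)"
        by (rule power2_norm_eq_inner)
      also have "\<dots> = 1 + inner u u"
        using jk by (simp add: inner_add_left inner_add_right inner_axis_axis)
      also have "inner u u = (cmod u)^2" by (rule power2_norm_eq_inner[symmetric])
      finally have n: "(norm (axis j 1 + axis k u))^2 = 1 + (cmod u)^2" .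
      have "bf (axis j 1 + axis k u) (axis j 1 + axis k u) = c * of_real (1 + (cmod u)^2)"
        by (simp only: bfq n)
      moreover have "bf (axis j 1 + axis k u) (axis j 1 + axis k u) = c + u * A$j$k + cnj u * A$k$j + cnj u * u * c"
        by (simp add: bf_addl bf_addr bf_ax diag mult_ac)
      ultimately show ?thesis by (simp add: algebra_simps)
    qed
    have e1: "A$j$k + A$k$j = 0" using eq[of 1] by (simp add: algebra_simps)
    have e2: "\<i> * A$j$k - \<i> * A$k$j = 0" using eq[of "\<i>"] by (simp add: algebra_simps)
    from e2 have "A$j$k = A$k$j" by (simp add: right_diff_distrib[symmetric])
    with e1 show ?thesis by simp
  qed
  show ?thesis
    unfolding vec_eq_iff scalar_mat_def c_def[symmetric]
    using diag offd by auto
qed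


lemma mu_root: "poly (PP M) (complex_of_real (mu M)) = 0"
proof -
  have fin: "finite (Re ` set_mset (proots (PP M)))" by simp
  have ne: "Re ` set_mset (proots (PP M)) \<noteq> {}"
  proof -
    have "size (proots (PP M)) = 3" by (simp add: size_proots_complex PP_degree)
    then show ?thesis by auto
  qed
  have "mu M \<in> Re ` set_mset (proots (PP M))" unfolding mu_def using fin ne by (rule Min_in)
  then obtain l where l: "l \<in># proots (PP M)" "mu M = Re l" by auto
  obtain v where "l = of_real ((norm (M *v v))^2 / (norm v)^2)" using root_real[OF l(1)] by blast
  then have "complex_of_real (mu M) = l" using l(2) by simp
  then show ?thesis using l(1) PP_nz by simp
qed

definition fro :: "cmat3 \<Rightarrow> real" where "fro A = (\<Sum>i\<in>UNIV. \<Sum>j\<in>UNIV. (cmod (A$i$j))^2)"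

lemma tr3_H: "tr3 (adjoint_mat M ** M) = of_real (fro M)"
  by (simp add: tr3_def fro_def matrix_matrix_mult_def adjoint_mat_def sum_3 mcnj2)

lemma cmod_diff_sq: "(cmod (a - b))^2 = (cmod a)^2 - 2 * Re (cnj a * b) + (cmod b)^2"
  unfolding cmod_power2 by (simp add: power2_eq_square algebra_simps)

lemma fro_shift: "fro (scalar_mat z - A) = 3 * (cmod z)^2 - 2 * Re (cnj z * tr3 A) + fro A"
  unfolding fro_def sum_3 ents tr3_def
  by (simp add: cmod_diff_sq algebra_simps)

lemma isCont_m2:
  assumes c: "\<And>i j. isCont (\<lambda>z. F z $i$j) z0"
  shows "isCont (\<lambda>z. m2 (F z :: complex^3^3)) z0"
  unfolding m2_def by (intro continuous_add continuous_diff continuous_mult c)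

lemma isCont_Hent:
  assumes c: "\<And>i j. isCont (\<lambda>z. F z $i$j) z0"
  shows "isCont (\<lambda>z. (adjoint_mat (F z) ** (F z :: complex^3^3)) $i$j) z0"
  unfolding matrix_matrix_mult_def adjoint_mat_def vec_lambda_beta
  by (intro continuous_sum continuous_mult continuous_cnj c)

lemma isCont_m2H: "isCont (\<lambda>z. m2 (adjoint_mat (scalar_mat z - A) ** (scalar_mat z - A))) z0"
proof -
  have "isCont (\<lambda>z. (scalar_mat z - A) $i$j) z0" for i j
    by (cases "i = j") (simp_all add: scalar_mat_def)
  then show ?thesis by (intro isCont_m2 isCont_Hent)
qed

lemma pf_m2:
  assumes c: "\<And>i j. pf (\<lambda>t. F t $i$j)"
  shows "pf (\<lambda>t. m2 (F t :: complex^3^3))"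
  unfolding m2_def by (intro pf_add pf_diff pf_mult c)

lemma pf_sum3: "(\<And>k. pf (f k)) \<Longrightarrow> pf (\<lambda>t. \<Sum>k\<in>(UNIV::3 set). f k t)"
  unfolding sum_3 by (intro pf_add) auto

lemma pf_Hent:
  assumes c: "\<And>i j. pf (\<lambda>t. F t $i$j)"
  shows "pf (\<lambda>t. (adjoint_mat (F t) ** (F t :: complex^3^3)) $i$j)"
  unfolding matrix_matrix_mult_def adjoint_mat_def vec_lambda_beta
  by (intro pf_sum3 pf_mult pf_cnj c)

lemma pf_m2H: "pf (\<lambda>t. m2 (adjoint_mat (scalar_mat (complex_of_real t * w) - A) ** (scalar_mat (complex_of_real t * w) - A)))"
proof -
  have "pf (\<lambda>t. (scalar_mat (complex_of_real t * w) - A) $i$j)" for i j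
    by (cases "i = j") (simp_all add: scalar_mat_def, (intro pf_diff pf_mult pf_id pf_const pf_uminus)+)
  then show ?thesis by (intro pf_m2 pf_Hent)
qed


lemma res_iff: "(\<forall>z. resolvent_norm A z = resolvent_norm B z) \<longleftrightarrow> (\<forall>z. mu (scalar_mat z - A) = mu (scalar_mat z - B))"
proof
  assume h: "\<forall>z. resolvent_norm A z = resolvent_norm B z"
  show "\<forall>z. mu (scalar_mat z - A) = mu (scalar_mat z - B)"
  proof
    fix z
    let ?a = "mu (scalar_mat z - A)" and ?b = "mu (scalar_mat z - B)"
    have a0: "?a \<ge> 0" and b0: "?b \<ge> 0" using mu_props by blast+
    have e: "(if ?a = 0 then \<infinity> else ereal (1 / sqrt ?a)) = (if ?b = 0 then \<infinity> else ereal (1 / sqrt ?b))"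
      using h resolvent_mu[of A z] resolvent_mu[of B z] by metis
    show "?a = ?b"
    proof (cases "?a = 0 \<or> ?b = 0")
      case True then show ?thesis using e by (auto split: if_splits)
    next
      case False
      then have "1 / sqrt ?a = 1 / sqrt ?b" using e by auto
      then have "sqrt ?a = sqrt ?b" by simp
      then show ?thesis by simp
    qed
  qed
next
  assume "\<forall>z. mu (scalar_mat z - A) = mu (scalar_mat z - B)"
  then show "\<forall>z. resolvent_norm A z = resolvent_norm B z" by (simp add: resolvent_mu)
qed

lemma det_iff_cp: "(\<forall>z. det (scalar_mat z - A) = det (scalar_mat z - B)) \<longleftrightarrow> char_poly3 A = char_poly3 B"
proof
  assume "\<forall>z. det (scalar_mat z - A) = det (scalar_mat z - B)"
  then have "poly (char_poly3 A) = poly (char_poly3 B)" by (simp add: fun_eq_iff poly_char_poly3)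
  then show "char_poly3 A = char_poly3 B" by (simp add: poly_eq_poly_eq_iff)
next
  assume "char_poly3 A = char_poly3 B"
  then show "\<forall>z. det (scalar_mat z - A) = det (scalar_mat z - B)" by (metis poly_char_poly3)
qed

lemma lead_cp: "lead_coeff (char_poly3 T) = 1"
  unfolding char_poly3_eq by simp

lemma PP_expand: "PP M = [:- det (adjoint_mat M ** M), m2 (adjoint_mat M ** M), - tr3 (adjoint_mat M ** M), 1:]"
  unfolding PP_def char_poly3_eq ..

lemma back_dir:
  assumes h: "\<forall>z. PP (scalar_mat z - A) = PP (scalar_mat z - B)"
  shows "(\<forall>z. mu (scalar_mat z - A) = mu (scalar_mat z - B)) \<and> char_poly3 A = char_poly3 B"
proof
  show "\<forall>z. mu (scalar_mat z - A) = mu (scalar_mat z - B)" using h by (simp add: mu_def)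
  have "cmod (poly (char_poly3 A) z) = cmod (poly (char_poly3 B) z)" for z
  proof -
    have "det (adjoint_mat (scalar_mat z - A) ** (scalar_mat z - A)) = det (adjoint_mat (scalar_mat z - B) ** (scalar_mat z - B))"
      using h[rule_format, of z] unfolding PP_expand by simp
    then have "(cmod (det (scalar_mat z - A)))^2 = (cmod (det (scalar_mat z - B)))^2"
      unfolding det_H of_real_eq_iff .
    then have "cmod (det (scalar_mat z - A)) = cmod (det (scalar_mat z - B))"
      by (simp add: power2_eq_iff_nonneg)
    then show ?thesis by (simp add: poly_char_poly3)
  qed
  then show "char_poly3 A = char_poly3 B" using monic_abs_eq lead_cp by blast
qed

lemma tr3_scalar: "tr3 (scalar_mat c) = 3 * c"
  by (simp add: tr3_def scalar_mat_def)

lemma poly4: "poly [:a, b, c, 1:] x = a + x * (b + x * (c + x))" for a b c x :: complex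
  by simp

lemma fwd_dir:
  assumes mu_eq: "\<forall>z. mu (scalar_mat z - A) = mu (scalar_mat z - B)"
      and cp: "char_poly3 A = char_poly3 B"
  shows "\<forall>z. PP (scalar_mat z - A) = PP (scalar_mat z - B)"
proof -
  define HA where "HA z = adjoint_mat (scalar_mat z - A) ** (scalar_mat z - A)" for z
  define HB where "HB z = adjoint_mat (scalar_mat z - B) ** (scalar_mat z - B)" for z
  define d where "d = fro A - fro B"
  define g where "g z = m2 (HA z) - m2 (HB z)" for z
  have trA: "tr3 A = tr3 B" using cp unfolding char_poly3_eq by simp
  have detM: "det (scalar_mat z - A) = det (scalar_mat z - B)" for z using cp det_iff_cp by metis
  have dH: "det (HA z) = det (HB z)" for z unfolding HA_def HB_def det_H detM ..
  have tH: "tr3 (HA z) = tr3 (HB z) + of_real d" for z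
    unfolding HA_def HB_def tr3_H fro_shift d_def trA by simp
  have m2rel: "g z = of_real (mu (scalar_mat z - A) * d)" if pos: "mu (scalar_mat z - A) > 0" for z
  proof -
    define m where "m = complex_of_real (mu (scalar_mat z - A))"
    have mB: "m = complex_of_real (mu (scalar_mat z - B))" using mu_eq m_def by simp
    have rA: "poly (PP (scalar_mat z - A)) m = 0" unfolding m_def by (rule mu_root)
    have rB: "poly (PP (scalar_mat z - B)) m = 0" unfolding mB by (rule mu_root)
    have e1: "- det (HA z) + m * (m2 (HA z) + m * (- tr3 (HA z) + m)) = 0"
      using rA unfolding PP_expand HA_def poly4 .
    have e2: "- det (HB z) + m * (m2 (HB z) + m * (- tr3 (HB z) + m)) = 0"
      using rB unfolding PP_expand HB_def poly4 .
    have "m * (g z - m * of_real d) = 0"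
      unfolding g_def using e1 e2 dH[of z] tH[of z] by algebra
    moreover have "m \<noteq> 0" using pos m_def by simp
    ultimately have "g z = m * of_real d" by simp
    then show ?thesis unfolding m_def by simp
  qed
  have pfg: "pf (\<lambda>t. g (complex_of_real t * w))" for w
    unfolding g_def HA_def HB_def by (intro pf_diff pf_m2H)
  have d0: "d = 0"
  proof (rule ccontr)
    assume dn: "d \<noteq> 0"
    have hypA: "\<forall>z. mu (scalar_mat z - A) > 0 \<longrightarrow> mu (scalar_mat z - A) * d = Re (g z)"
      using m2rel by simp
    have hypB: "\<forall>z. mu (scalar_mat z - B) > 0 \<longrightarrow> mu (scalar_mat z - B) * d = Re (g z)"
      using m2rel mu_eq by simp
    have scal: "\<exists>c. T = scalar_mat c"
      if hyp: "\<forall>z. mu (scalar_mat z - T) > 0 \<longrightarrow> mu (scalar_mat z - T) * d = Re (g z)" for T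
    proof -
      obtain k1 where k1: "\<forall>x. inner (1 *s x) (T *v x) = k1 * (norm x)^2"
        using scalar_dir[of 1 d T g] dn hyp pfg[of 1] by auto
      obtain k2 where k2: "\<forall>x. inner (\<i> *s x) (T *v x) = k2 * (norm x)^2"
        using scalar_dir[of "\<i>" d T g] dn hyp pfg by auto
      have "\<forall>x. inner x (T *v x) = k1 * (norm x)^2" using k1 by simp
      then show ?thesis using scalar_from_inner k2 by blast
    qed
    obtain cA where cA: "A = scalar_mat cA" using scal hypA by blast
    obtain cB where cB: "B = scalar_mat cB" using scal hypB by blast
    have "cA = cB" using trA unfolding cA cB tr3_scalar by simp
    then have "A = B" using cA cB by simp
    then show False using dn d_def by simp
  qed
  have gz: "g z0 = 0" for z0
  proof -
    define S where "S = {z. poly (char_poly3 A) z = 0}"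
    have finS: "finite S" unfolding S_def
      by (rule poly_roots_finite) (metis lead_cp leading_coeff_0_iff zero_neq_one)
    have "isCont g z0" unfolding g_def HA_def HB_def by (intro continuous_diff isCont_m2H)
    moreover have "g z = 0" if "z \<notin> S" for z
    proof -
      have "det (scalar_mat z - A) \<noteq> 0" using that by (simp add: S_def poly_char_poly3)
      then have "mu (scalar_mat z - A) > 0" by (simp add: inv_mu[symmetric] invertible_det_nz)
      then show ?thesis using m2rel d0 by simp
    qed
    ultimately show ?thesis using eq_at_point[where f=g and g="\<lambda>_. 0" and S=S] finS by auto
  qed
  show ?thesis
  proof
    fix z
    have "m2 (HA z) = m2 (HB z)" using gz[of z] g_def by simp
    moreover have "tr3 (HA z) = tr3 (HB z)" using tH d0 by simp
    ultimately show "PP (scalar_mat z - A) = PP (scalar_mat z - B)"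
      unfolding PP_expand using dH[of z] HA_def HB_def by simp
  qed
qed

theorem theorem6:
  fixes A B :: "complex ^ 3 ^ 3"
  shows "((\<forall>z. resolvent_norm A z = resolvent_norm B z) \<and>
          (\<forall>z. det (scalar_mat z - A) = det (scalar_mat z - B)))
     \<longleftrightarrow> (\<forall>z. \<forall>k\<in>{1,2,3}. singular_value (scalar_mat z - A) k = singular_value (scalar_mat z - B) k)"
  unfolding res_iff det_iff_cp SV_iff
  using fwd_dir back_dir by blast


end
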